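(* $\mathfrak{U}(\mathbb{R})$ is a hyperfinite dimensional vector space over $\mathbb{R}^*$, and $\dim\mathfrak{U}(\mathbb{R})\le \ell\cdot\dim\widetilde{\mathcal{C}^1(\mathbb{R})}$.
   Context: Framework (Λ-limits / nonstandard analysis): let $\mathfrak{X}=\mathcal{P}_{fin}(\mathfrak{F}(\mathbb{R},\mathbb{R}))$ be the set of finite sets of real functions on $\mathbb{R}$, directed by inclusion. $\mathbb{R}^*\supset\mathbb{R}$ is a non-Archimedean ordered field whose elements are Λ-limits of nets $\varphi:\mathfrak{X}\to\mathbb{R}$; Λ-limits of nets of sets/functions give internal sets/functions; natural extensions $E^*$, $f^*$ are Λ-limits of constant nets; hyperfinite sets/sums/dimensions are Λ-limits of finite ones. For $\lambda\in\mathfrak{X}$ let $V_\lambda$ be the span of $\lambda$. An internal function $u=\lim_{\lambda\uparrow\Lambda}u_\lambda$ is an ultrafunction if $u_\lambda\in V_\lambda$ for all $\lambda$; for a vector space $W$ of real functions, $\widetilde{W}=W^*\cap\{\text{ultrafunctions}\}$ (a hyperfinite dimensional space). Grid: fix a positive infinite $\beta\in\mathbb{R}^*$ and a hyperfinite set $\Gamma=\{\gamma_0<\dots<\gamma_\ell\}\subset\mathbb{R}^*$ ($\ell$ hypernatural) with $\gamma_0=-\beta$, $\gamma_\ell=\beta$, $0<\gamma_{j+1}-\gamma_j<\eta$ for a fixed infinitesimal $\eta$, and $\mathbb{R}\subseteq\Gamma$. For $j=0,\dots,\ell-1$, $\mathbb{I}_j=(\gamma_j,\gamma_{j+1})_{\mathbb{R}^*}$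 and $\chi_j$ is its characteristic function. $\mathfrak{U}(\mathbb{R})$ is the set of functions $u:[-\beta,\beta]\to\mathbb{R}^*$ representable as an internal hyperfinite sum $u=\sum_{j=0}^{\ell-1}v_j\chi_j$ with each $v_j\in\widetilde{\mathcal{C}^1(\mathbb{R})}$. *)

theory Defs
  imports "HOL-Analysis.Analysis" "HOL-Library.Function_Algebras"
begin

text \<open>Lambda-theory encoded via nets indexed by
  lambda in X = P_fin(F(R,R)); an index is a set of real functions.
  Lambda-limits are taken along a fine ultrafilter F on such indices:
  an internal object is a net, and a property of a Lambda-limit holds iff it
  holds eventually along F (Los).\<close>

type_synonym idx = "(real \<Rightarrow> real) set"

definition Lambda_ultrafilter :: "idx filter \<Rightarrow> bool" where
  "Lambda_ultrafilter F \<longleftrightarrow>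
     F \<noteq> bot \<and>
     (\<forall>P. eventually P F \<or> eventually (\<lambda>l. \<not> P l) F) \<and>
     eventually finite F \<and>
     (\<forall>a. finite a \<longrightarrow> eventually (\<lambda>l. a \<subseteq> l) F)"

definition fscale :: "real \<Rightarrow> (real \<Rightarrow> real) \<Rightarrow> (real \<Rightarrow> real)" where
  "fscale c f = (\<lambda>x. c * f x)"

definition Vspan :: "idx \<Rightarrow> (real \<Rightarrow> real) set" where
  "Vspan l = module.span fscale l"

definition C1_fun :: "(real \<Rightarrow> real) set" where
  "C1_fun = {f. f C1_differentiable_on UNIV}"

text \<open>The net whose Lambda-limit is the ultrafunction space of C^1(R):
  W* intersected with ultrafunctions = lim (W \<inter> V_lambda).\<close>
definition C1_tilde :: "idx \<Rightarrow> (real \<Rightarrow> real) set" where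
  "C1_tilde l = C1_fun \<inter> Vspan l"

text \<open>The grid: beta positive infinite, eta positive infinitesimal,
  Gamma = {gam 0 < ... < gam ell} with gam 0 = -beta, gam ell = beta,
  gaps in (0, eta), and R contained in Gamma.\<close>
definition is_grid ::
  "idx filter \<Rightarrow> (idx \<Rightarrow> real) \<Rightarrow> (idx \<Rightarrow> real) \<Rightarrow> (idx \<Rightarrow> nat) \<Rightarrow> (idx \<Rightarrow> nat \<Rightarrow> real) \<Rightarrow> bool"
where
  "is_grid F beta eta ell gam \<longleftrightarrow>
     (\<forall>r::real. eventually (\<lambda>l. r < beta l) F) \<and>
     (\<forall>r::real. r > 0 \<longrightarrow> eventually (\<lambda>l. 0 < eta l \<and> eta l < r) F) \<and>
     eventually (\<lambda>l. gam l 0 = - beta l \<and> gam l (ell l) = beta l \<and>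
        (\<forall>j < ell l. 0 < gam l (Suc j) - gam l j \<and> gam l (Suc j) - gam l j < eta l)) F \<and>
     (\<forall>r::real. eventually (\<lambda>l. r \<in> gam l ` {0..ell l}) F)"

text \<open>The net whose Lambda-limit is U(R): functions on [-beta,beta]
  (extended by 0 outside) of the form sum_{j<ell} v_j chi_j with v_j in C1_tilde.\<close>
definition Ufrak ::
  "(idx \<Rightarrow> real) \<Rightarrow> (idx \<Rightarrow> nat) \<Rightarrow> (idx \<Rightarrow> nat \<Rightarrow> real) \<Rightarrow> idx \<Rightarrow> (real \<Rightarrow> real) set"
where
  "Ufrak beta ell gam l =
     {u. \<exists>v. (\<forall>j < ell l. v j \<in> C1_tilde l) \<and>
           u = (\<lambda>x. if x \<in> {- beta l .. beta l}
                     then (\<Sum>j < ell l. v j x * indicator {gam l j <..< gam l (Suc j)} x)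
                     else 0)}"

text \<open>An internal set S = lim S_lambda is a hyperfinite dimensional vector space
  over R* iff eventually S_lambda is a finite dimensional linear subspace;
  its (hypernatural) dimension is lim dim S_lambda.\<close>
definition hyperfinite_dim_space :: "idx filter \<Rightarrow> (idx \<Rightarrow> (real \<Rightarrow> real) set) \<Rightarrow> bool" where
  "hyperfinite_dim_space F S \<longleftrightarrow>
     eventually (\<lambda>l. module.subspace fscale (S l) \<and>
                     (\<exists>B. finite B \<and> S l \<subseteq> module.span fscale B)) F"

definition hdim :: "(idx \<Rightarrow> (real \<Rightarrow> real) set) \<Rightarrow> idx \<Rightarrow> nat" where
  "hdim S l = vector_space.dim fscale (S l)"

definition hnat_le :: "idx filter \<Rightarrow> (idx \<Rightarrow> nat) \<Rightarrow> (idx \<Rightarrow> nat) \<Rightarrow> bool" where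
  "hnat_le F a b \<longleftrightarrow> eventually (\<lambda>l. a l \<le> b l) F"

end

theory Submission
  imports Defs
begin

lemma fsum_apply: "(\<Sum>i\<in>A. (f i :: real \<Rightarrow> real)) x = (\<Sum>i\<in>A. f i x)"
  by (induction A rule: infinite_finite_induct) auto

interpretation FV: vector_space fscale
  by unfold_locales (auto simp: fscale_def algebra_simps fun_eq_iff)

lemma fscale_apply: "fscale c f x = c * f x" by (simp add: fscale_def)

lemma C1_subspace: "FV.subspace C1_fun"
proof (rule FV.subspaceI)
  show "0 \<in> C1_fun" unfolding C1_fun_def zero_fun_def by simp
next
  fix f g assume "f \<in> C1_fun" "g \<in> C1_fun"
  then show "f + g \<in> C1_fun" unfolding C1_fun_def plus_fun_def by simp
next
  fix c f assume "f \<in> C1_fun"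
  then show "fscale c f \<in> C1_fun" unfolding C1_fun_def fscale_def by simp
qed

lemma C1_tilde_subspace: "FV.subspace (C1_tilde l)"
  unfolding C1_tilde_def Vspan_def by (intro FV.subspace_inter C1_subspace FV.subspace_span)

lemma per_index:
  assumes fin: "finite l"
  shows "FV.subspace (Ufrak beta ell gam l) \<and>
         (\<exists>B. finite B \<and> Ufrak beta ell gam l \<subseteq> FV.span B) \<and>
         hdim (Ufrak beta ell gam) l \<le> ell l * hdim C1_tilde l"
proof -
  define n where "n = ell l"
  define I where "I = {- beta l .. beta l}"
  define J where "J j = {gam l j <..< gam l (Suc j)}" for j
  define trm where "trm j w = (\<lambda>x. if x \<in> I then w x * indicator (J j) x else (0::real))"
    for j and w :: "real \<Rightarrow> real"
  define Phi where "Phi v = (\<lambda>x. if x \<in> I then (\<Sum>j<n. v j x * indicator (J j) x) else (0::real))"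
    for v :: "nat \<Rightarrow> real \<Rightarrow> real"
  define C where "C = C1_tilde l"
  have U: "Ufrak beta ell gam l = {Phi v | v. \<forall>j<n. v j \<in> C}"
    unfolding Ufrak_def Phi_def n_def I_def J_def C_def by blast
  have Csub: "FV.subspace C" unfolding C_def by (rule C1_tilde_subspace)
  obtain B where B: "B \<subseteq> C" "FV.independent B" "C \<subseteq> FV.span B" "card B = FV.dim C"
    using FV.basis_exists by blast
  have "C \<subseteq> FV.span l" unfolding C_def C1_tilde_def Vspan_def by blast
  with B have finB: "finite B"
    using FV.independent_span_bound[OF fin B(2)] by blast
  define S where "S = (\<lambda>(b,j). trm j b) ` (B \<times> {..<n})"
  have finS: "finite S" unfolding S_def using finB by simp
  have cardS: "card S \<le> n * card B"
    unfolding S_def using card_image_le[of "B \<times> {..<n}"] finB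
    by (simp add: card_cartesian_product mult.commute)
  have Phi_sum: "Phi v = (\<Sum>j<n. trm j (v j))" for v
    unfolding Phi_def trm_def by (rule ext) (simp add: fsum_apply)
  have trm_span: "trm j w \<in> FV.span S" if "j < n" "w \<in> C" for j w
  proof -
    have "w \<in> range (\<lambda>u. \<Sum>b\<in>B. fscale (u b) b)"
      using that B(3) FV.span_finite[OF finB] by blast
    then obtain c where w: "w = (\<Sum>b\<in>B. fscale (c b) b)" by blast
    have "trm j w = (\<Sum>b\<in>B. fscale (c b) (trm j b))"
      unfolding w trm_def by (rule ext) (simp add: fsum_apply fscale_apply sum_distrib_right; simp add: mult.assoc)
    also have "\<dots> \<in> FV.span S"
    proof (rule FV.span_sum)
      fix b assume "b \<in> B"
      then have "trm j b \<in> S" unfolding S_def using that by force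
      then show "fscale (c b) (trm j b) \<in> FV.span S"
        by (intro FV.span_scale FV.span_base)
    qed
    finally show ?thesis .
  qed
  have Usub: "Ufrak beta ell gam l \<subseteq> FV.span S"
  proof
    fix u assume "u \<in> Ufrak beta ell gam l"
    then obtain v where v: "\<forall>j<n. v j \<in> C" "u = Phi v" unfolding U by blast
    show "u \<in> FV.span S" unfolding v(2) Phi_sum
      by (rule FV.span_sum) (use v(1) trm_span in auto)
  qed
  have subsp: "FV.subspace (Ufrak beta ell gam l)"
  proof (rule FV.subspaceI)
    have "0 \<in> C" using Csub by (rule FV.subspace_0)
    moreover have "0 = Phi (\<lambda>j. 0)" unfolding Phi_def by (rule ext) simp
    ultimately have "\<exists>v. 0 = Phi v \<and> (\<forall>j<n. v j \<in> C)" by blast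
    then show "0 \<in> Ufrak beta ell gam l" unfolding U by simp
  next
    fix x y assume "x \<in> Ufrak beta ell gam l" "y \<in> Ufrak beta ell gam l"
    then obtain v w where v: "\<forall>j<n. v j \<in> C" "x = Phi v" and w: "\<forall>j<n. w j \<in> C" "y = Phi w"
      unfolding U by blast
    have "\<forall>j<n. v j + w j \<in> C" using v(1) w(1) FV.subspace_add[OF Csub] by blast
    moreover have "x + y = Phi (\<lambda>j. v j + w j)"
      unfolding v(2) w(2) Phi_def by (rule ext) (simp add: sum.distrib algebra_simps)
    ultimately show "x + y \<in> Ufrak beta ell gam l" unfolding U by blast
  next
    fix c x assume "x \<in> Ufrak beta ell gam l"
    then obtain v where v: "\<forall>j<n. v j \<in> C" "x = Phi v" unfolding U by blast
    have "\<forall>j<n. fscale c (v j) \<in> C" using v(1) FV.subspace_scale[OF Csub] by blast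
    moreover have "fscale c x = Phi (\<lambda>j. fscale c (v j))"
      unfolding v(2) Phi_def by (rule ext) (simp add: fscale_apply sum_distrib_left)
    ultimately show "fscale c x \<in> Ufrak beta ell gam l" unfolding U by blast
  qed
  have "hdim (Ufrak beta ell gam) l \<le> card S"
    unfolding hdim_def using FV.dim_le_card[OF Usub finS] .
  also have "\<dots> \<le> ell l * hdim C1_tilde l"
    using cardS B(4) unfolding n_def hdim_def C_def by simp
  finally show ?thesis using subsp Usub finS by blast
qed

theorem mainTheorem2:
  fixes F :: "idx filter"
    and beta eta :: "idx \<Rightarrow> real"
    and ell :: "idx \<Rightarrow> nat"
    and gam :: "idx \<Rightarrow> nat \<Rightarrow> real"
  assumes "Lambda_ultrafilter F"
    and "is_grid F beta eta ell gam"
  shows "hyperfinite_dim_space F (Ufrak beta ell gam)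
         \<and> hnat_le F (hdim (Ufrak beta ell gam)) (\<lambda>l. ell l * hdim C1_tilde l)"
proof -
  have ev: "eventually finite F" using assms(1) unfolding Lambda_ultrafilter_def by blast
  show ?thesis
    unfolding hyperfinite_dim_space_def hnat_le_def
  proof
    have ev2: "\<forall>\<^sub>F l in F. FV.subspace (Ufrak beta ell gam l) \<and>
         (\<exists>B. finite B \<and> Ufrak beta ell gam l \<subseteq> FV.span B) \<and>
         hdim (Ufrak beta ell gam) l \<le> ell l * hdim C1_tilde l"
      by (rule eventually_mono[OF ev]) (rule per_index)
    show "\<forall>\<^sub>F l in F. FV.subspace (Ufrak beta ell gam l) \<and>
         (\<exists>B. finite B \<and> Ufrak beta ell gam l \<subseteq> FV.span B)"
      by (rule eventually_mono[OF ev2]) (elim conjE, simp)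
    show "\<forall>\<^sub>F l in F. hdim (Ufrak beta ell gam) l \<le> ell l * hdim C1_tilde l"
      by (rule eventually_mono[OF ev2]) (elim conjE, simp)
  qed
qed

end
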